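(* Let $X$ be a set, $T:X\to X$ a map, and $G$ a finite group acting on $X$ such that $g\circ T=T\circ g$ for all $g\in G$. Let $x\in X$ be a periodic point of $T$ and let $k\in\mathbb{N}$. Then the orbit $\mathfrak{O}_T(x)$ shortens in length by a factor of $\frac{1}{k}$ if and only if $|\mathfrak{O}_T(x)\cap\mathfrak{O}_G(x)|=k$. Moreover, if $\mathfrak{O}_T(x)$ shortens in length by a factor of $\frac1k$, then there exists $g\in G$ such that $\mathfrak{O}_T(x)\cap\mathfrak{O}_G(x)=\{g^i(x): i\in\mathbb{N}_0\}$.
   Context: For $x\in X$, $\mathfrak{O}_T(x)=\{T^j(x): j\geqslant 0\}$ is the (closed, i.e. finite) orbit of $x$ under $T$, and $\mathfrak{O}_G(x)=\{g(x):g\in G\}$ is the orbit of $x$ under $G$. Let $X'=G\backslash X=\{\mathfrak{O}_G(x):x\in X\}$, $\pi:X\to X'$, $\pi(x)=\mathfrak{O}_G(x)$, and let $T':X'\to X'$ be the induced map $T'(\mathfrak{O}_G(x))=\mathfrak{O}_G(T(x))$ (well defined since the action commutes with $T$). The orbit $\mathfrak{O}_T(x)$ of a periodic point $x$ "shortens in length by a factor of $\frac1k$" means $|\mathfrak{O}_{T'}(\pi(x))|=\frac{1}{k}|\mathfrak{O}_T(x)|$. *)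

theory Defs
  imports Complex_Main "HOL-Algebra.Group_Action"
begin

definition T_orbit :: "('b \<Rightarrow> 'b) \<Rightarrow> 'b \<Rightarrow> 'b set" where
  "T_orbit T x = {(T ^^ j) x | j. True}"

definition periodic_point :: "('b \<Rightarrow> 'b) \<Rightarrow> 'b \<Rightarrow> bool" where
  "periodic_point T x \<longleftrightarrow> (\<exists>n>0. (T ^^ n) x = x)"

definition orbit_proj :: "('a, 'c) monoid_scheme \<Rightarrow> ('a \<Rightarrow> 'b \<Rightarrow> 'b) \<Rightarrow> 'b \<Rightarrow> 'b set" where
  "orbit_proj G \<phi> x = orbit G \<phi> x"

text \<open>The induced map T' on G\X: T'(O_G(y)) = O_G(T(y)) (choosing a representative y
  of the orbit; well defined when the action commutes with T).\<close>
definition induced_map ::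
  "('a, 'c) monoid_scheme \<Rightarrow> ('a \<Rightarrow> 'b \<Rightarrow> 'b) \<Rightarrow> ('b \<Rightarrow> 'b) \<Rightarrow> 'b set \<Rightarrow> 'b set" where
  "induced_map G \<phi> T S = orbit G \<phi> (T (SOME y. y \<in> S))"

end

theory Submission
  imports Defs
begin

lemma funpow_apply_add: "(f ^^ (a + b)) y = (f ^^ a) ((f ^^ b) y)"
  by (simp add: funpow_add)

lemma keyarith:
  fixes d k k0 p :: nat
  assumes "d > 0" "k0 > 0" "p = k0 * d"
  shows "(real d = 1 / real k * real p) \<longleftrightarrow> k0 = k"
proof (cases "k = 0")
  case True then show ?thesis using assms by simp
next
  case False
  have kpos: "real k > 0" using False by simp
  have "(real d = 1 / real k * real p) \<longleftrightarrow> real d * real k = real p"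
    using kpos by (auto simp add: field_simps)
  also have "\<dots> \<longleftrightarrow> d * k = p" by (simp only: of_nat_mult[symmetric] of_nat_eq_iff)
  also have "\<dots> \<longleftrightarrow> d * k = d * k0" unfolding assms(3) by (simp only: mult.commute)
  also have "\<dots> \<longleftrightarrow> k0 = k" using assms(1) by auto
  finally show ?thesis .
qed

theorem lemma4:
  fixes G :: "('a, 'c) monoid_scheme" and X :: "'b set" and \<phi> :: "'a \<Rightarrow> 'b \<Rightarrow> 'b"
    and T :: "'b \<Rightarrow> 'b" and x :: 'b and k :: nat
  assumes act: "group_action G X \<phi>"
    and fin: "finite (carrier G)"
    and T_maps: "\<And>y. y \<in> X \<Longrightarrow> T y \<in> X"
    and comm: "\<And>g y. g \<in> carrier G \<Longrightarrow> y \<in> X \<Longrightarrow> \<phi> g (T y) = T (\<phi> g y)"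
    and xX: "x \<in> X"
    and per: "periodic_point T x"
  shows "((real (card (T_orbit (induced_map G \<phi> T) (orbit_proj G \<phi> x)))
            = (1 / real k) * real (card (T_orbit T x)))
         \<longleftrightarrow> card (T_orbit T x \<inter> orbit G \<phi> x) = k)
         \<and> (real (card (T_orbit (induced_map G \<phi> T) (orbit_proj G \<phi> x)))
            = (1 / real k) * real (card (T_orbit T x))
         \<longrightarrow> (\<exists>g \<in> carrier G. T_orbit T x \<inter> orbit G \<phi> x = {\<phi> (g [^]\<^bsub>G\<^esub> i) x | i :: nat. True}))"
proof -
  interpret A: group_action G X \<phi> by (rule act)
  interpret grp: group G using A.group_hom group_hom.axioms(1) by auto
  have TjX: "\<And>j y. y \<in> X \<Longrightarrow> (T ^^ j) y \<in> X"
  proof -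
    fix j y assume "y \<in> X" then show "(T ^^ j) y \<in> X" by (induction j) (auto simp: T_maps)
  qed
  have commj: "\<And>j g y. g \<in> carrier G \<Longrightarrow> y \<in> X \<Longrightarrow> \<phi> g ((T ^^ j) y) = (T ^^ j) (\<phi> g y)"
  proof -
    fix j g y assume g: "g \<in> carrier G" and y: "y \<in> X"
    show "\<phi> g ((T ^^ j) y) = (T ^^ j) (\<phi> g y)"
      by (induction j) (auto simp: comm g y TjX A.element_image)
  qed
  have phiX: "\<And>g y. g \<in> carrier G \<Longrightarrow> y \<in> X \<Longrightarrow> \<phi> g y \<in> X"
    using A.element_image by blast
  have orb_eq: "\<And>g y. g \<in> carrier G \<Longrightarrow> y \<in> X \<Longrightarrow> orbit G \<phi> (\<phi> g y) = orbit G \<phi> y"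
  proof -
    fix g y assume g: "g \<in> carrier G" and y: "y \<in> X"
    have yin: "\<phi> g y \<in> orbit G \<phi> y" using g unfolding orbit_def by blast
    have yin2: "y \<in> orbit G \<phi> (\<phi> g y)" using A.orbit_sym[OF y phiX[OF g y] yin] .
    have osub: "\<And>z. z \<in> orbit G \<phi> z' \<Longrightarrow> z' \<in> X \<Longrightarrow> z \<in> X" for z'
      unfolding orbit_def using phiX by blast
    show "orbit G \<phi> (\<phi> g y) = orbit G \<phi> y"
    proof
      show "orbit G \<phi> (\<phi> g y) \<subseteq> orbit G \<phi> y"
        using A.orbit_trans[OF y phiX[OF g y] _ yin] osub phiX[OF g y] by blast
      show "orbit G \<phi> y \<subseteq> orbit G \<phi> (\<phi> g y)"
        using A.orbit_trans[OF phiX[OF g y] y _ yin2] osub y by blast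
    qed
  qed
  define P where "P j \<longleftrightarrow> (T ^^ j) x \<in> orbit G \<phi> x" for j
  obtain n0 where n0: "n0 > 0" "(T ^^ n0) x = x" using per unfolding periodic_point_def by blast
  define p where "p = (LEAST n. n > 0 \<and> (T ^^ n) x = x)"
  have p: "p > 0" "(T ^^ p) x = x"
    using LeastI[of "\<lambda>n. n > 0 \<and> (T ^^ n) x = x", OF conjI[OF n0]] unfolding p_def by auto
  have pmin: "\<And>m. 0 < m \<Longrightarrow> m < p \<Longrightarrow> (T ^^ m) x \<noteq> x"
    using not_less_Least unfolding p_def by blast
  have pmul: "(T ^^ (q * p)) x = x" for q
    by (induction q) (auto simp: funpow_apply_add p)
  have pmod: "(T ^^ j) x = (T ^^ (j mod p)) x" for j
  proof -
    have "(T ^^ j) x = (T ^^ (j mod p + (j div p) * p)) x" by simp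
    also have "\<dots> = (T ^^ (j mod p)) x" by (simp only: funpow_apply_add pmul)
    finally show ?thesis .
  qed
  have pinj: "inj_on (\<lambda>j. (T ^^ j) x) {..<p}"
  proof (rule inj_onI, rule ccontr)
    fix a b assume a: "a \<in> {..<p}" and b: "b \<in> {..<p}" and e: "(T ^^ a) x = (T ^^ b) x" and ne: "a \<noteq> b"
    { fix a b assume a: "a < p" and b: "b < p" and e: "(T ^^ a) x = (T ^^ b) x" and lt: "a < b"
      have "(T ^^ (p - b + b)) x = (T ^^ (p - b + a)) x" using e by (simp only: funpow_apply_add)
      then have "(T ^^ (p - b + a)) x = x" using b p by simp
      moreover have "0 < p - b + a" "p - b + a < p" using a b lt by auto
      ultimately have False using pmin[of "p - b + a"] by simp }
    note H = this
    show False
    proof (cases "a < b")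
      case True then show ?thesis using H[of a b] a b e by simp
    next
      case False then have "b < a" using ne by simp
      then show ?thesis using H[of b a] a b e by simp
    qed
  qed
  have Torb: "T_orbit T x = (\<lambda>j. (T ^^ j) x) ` {..<p}"
    proof
    show "T_orbit T x \<subseteq> (\<lambda>j. (T ^^ j) x) ` {..<p}"
    proof
      fix z assume "z \<in> T_orbit T x"
      then obtain j where "z = (T ^^ j) x" unfolding T_orbit_def by blast
      then have "z = (T ^^ (j mod p)) x" "j mod p \<in> {..<p}" using pmod[of j] p(1) by auto
      then show "z \<in> (\<lambda>j. (T ^^ j) x) ` {..<p}" by blast
    qed
    show "(\<lambda>j. (T ^^ j) x) ` {..<p} \<subseteq> T_orbit T x" unfolding T_orbit_def by auto
  qed
  have cardT: "card (T_orbit T x) = p" using Torb pinj by (simp add: card_image)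
  have Pdef2: "P j \<longleftrightarrow> (\<exists>g \<in> carrier G. (T ^^ j) x = \<phi> g x)" for j
    unfolding P_def orbit_def by auto
  have Psub: "P (a - b)" if Pa: "P a" and Pb: "P b" and ba: "b \<le> a" for a b
  proof -
    obtain h where h: "h \<in> carrier G" "(T ^^ a) x = \<phi> h x" using Pdef2[of a, THEN iffD1, OF Pa] by (elim bexE) simp
    obtain g where g: "g \<in> carrier G" "(T ^^ b) x = \<phi> g x" using Pdef2[of b, THEN iffD1, OF Pb] by (elim bexE) simp
    have ab: "a - b + b = a" using ba by simp
    have "\<phi> h x = (T ^^ (a - b + b)) x" unfolding ab h(2) ..
    also have "\<dots> = (T ^^ (a - b)) ((T ^^ b) x)" by (rule funpow_apply_add)
    also have "\<dots> = (T ^^ (a - b)) (\<phi> g x)" unfolding g(2) ..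
    also have "\<dots> = \<phi> g ((T ^^ (a - b)) x)" by (rule commj[OF g(1) xX, symmetric])
    finally have e1: "\<phi> g ((T ^^ (a - b)) x) = \<phi> h x" by (rule sym)
    have e2: "\<phi> (inv\<^bsub>G\<^esub> g) (\<phi> h x) = (T ^^ (a - b)) x"
      by (rule A.orbit_sym_aux[OF g(1) TjX[OF xX] e1])
    have e3: "\<phi> (inv\<^bsub>G\<^esub> g \<otimes>\<^bsub>G\<^esub> h) x = \<phi> (inv\<^bsub>G\<^esub> g) (\<phi> h x)"
      by (rule A.composition_rule[OF xX grp.inv_closed[OF g(1)] h(1)])
    have e4: "(T ^^ (a - b)) x = \<phi> (inv\<^bsub>G\<^esub> g \<otimes>\<^bsub>G\<^esub> h) x" unfolding e3 e2 ..
    have e5: "inv\<^bsub>G\<^esub> g \<otimes>\<^bsub>G\<^esub> h \<in> carrier G" using grp.m_closed[OF grp.inv_closed[OF g(1)] h(1)] .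
    show ?thesis by (rule Pdef2[THEN iffD2], rule bexI[OF _ e5], rule e4)
  qed
  have P0: "P 0" unfolding P_def using A.orbit_refl xX by simp
  have Pp: "P p" using P0 p unfolding P_def by simp
  define d where "d = (LEAST j. j > 0 \<and> P j)"
  have d: "d > 0" "P d" using LeastI[of "\<lambda>j. j > 0 \<and> P j", OF conjI[OF p(1) Pp]] unfolding d_def by auto
  have dmin: "\<And>m. 0 < m \<Longrightarrow> m < d \<Longrightarrow> \<not> P m" using not_less_Least unfolding d_def by blast
  have dlep: "d \<le> p" using dmin Pp p(1) by (meson not_le)
  obtain g0 where g0: "g0 \<in> carrier G" "(T ^^ d) x = \<phi> g0 x" using Pdef2[of d, THEN iffD1, OF d(2)] by (elim bexE) simp
  have gpow: "(T ^^ (i * d)) x = \<phi> (g0 [^]\<^bsub>G\<^esub> i) x" for i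
  proof (induction i)
    case 0
    have "\<phi> \<one>\<^bsub>G\<^esub> x = (\<lambda>x\<in>X. x) x" using A.id_eq_one by simp
    then show ?case using xX by simp
  next
    case (Suc i)
    have "(T ^^ (Suc i * d)) x = (T ^^ (i * d)) ((T ^^ d) x)" by (simp add: funpow_apply_add[symmetric] add.commute)
    also have "\<dots> = \<phi> g0 ((T ^^ (i * d)) x)" unfolding g0(2) by (rule commj[OF g0(1) xX, symmetric])
    also have "\<dots> = \<phi> g0 (\<phi> (g0 [^]\<^bsub>G\<^esub> i) x)" unfolding Suc.IH ..
    also have "\<dots> = \<phi> (g0 \<otimes>\<^bsub>G\<^esub> g0 [^]\<^bsub>G\<^esub> i) x"
      by (rule A.composition_rule[OF xX g0(1) grp.nat_pow_closed[OF g0(1)], symmetric])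
    also have "\<dots> = \<phi> (g0 [^]\<^bsub>G\<^esub> Suc i) x" unfolding grp.nat_pow_Suc2[OF g0(1)] ..
    finally show ?case .
  qed
  have Pmul: "P (i * d)" for i by (rule Pdef2[THEN iffD2], rule bexI[OF _ grp.nat_pow_closed[OF g0(1)]], rule gpow)
  have Pdvd: "P j \<Longrightarrow> d dvd j" for j
  proof (induction j rule: less_induct)
    case (less j)
    show ?case
    proof (cases "j < d")
      case True then show ?thesis using dmin less.prems by (cases "j = 0") auto
    next
      case False
      then have "P (j - d)" using Psub less.prems d by simp
      then have "d dvd (j - d)" using less.IH d(1) False by simp
      then show ?thesis using False by (metis dvd_add_right_iff dvd_refl le_add_diff_inverse not_le)
    qed
  qed
  have ddvdp: "d dvd p" using Pdvd Pp .
  then obtain k0 where k0: "p = k0 * d" by (metis dvd_def mult.commute)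
  have k0pos: "k0 > 0" using k0 p(1) by (cases k0) auto
  have Int_eq: "T_orbit T x \<inter> orbit G \<phi> x = (\<lambda>i. (T ^^ (i * d)) x) ` {..<k0}"
  proof
    show "T_orbit T x \<inter> orbit G \<phi> x \<subseteq> (\<lambda>i. (T ^^ (i * d)) x) ` {..<k0}"
    proof
      fix z assume z: "z \<in> T_orbit T x \<inter> orbit G \<phi> x"
      then obtain j where j: "j < p" "z = (T ^^ j) x" using Torb by auto
      then have "P j" using z P_def by simp
      then obtain i where i: "j = i * d" using Pdvd by (metis dvd_def mult.commute)
      then have "i < k0" using j k0 d(1) by simp
      then show "z \<in> (\<lambda>i. (T ^^ (i * d)) x) ` {..<k0}" using i j by auto
    qed
    show "(\<lambda>i. (T ^^ (i * d)) x) ` {..<k0} \<subseteq> T_orbit T x \<inter> orbit G \<phi> x"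
      using Pmul unfolding P_def T_orbit_def by auto
  qed
  have cardI: "card (T_orbit T x \<inter> orbit G \<phi> x) = k0"
  proof -
    have "inj_on (\<lambda>i. (T ^^ (i * d)) x) {..<k0}"
    proof (rule inj_onI)
      fix a b assume "a \<in> {..<k0}" "b \<in> {..<k0}" "(T ^^ (a * d)) x = (T ^^ (b * d)) x"
      moreover have "a * d < p" "b * d < p" using calculation k0 d(1) by auto
      ultimately have "a * d = b * d" using pinj unfolding inj_on_def by blast
      then show "a = b" using d(1) by simp
    qed
    then show ?thesis using Int_eq by (simp add: card_image)
  qed
  have ind: "induced_map G \<phi> T (orbit G \<phi> y) = orbit G \<phi> (T y)" if y: "y \<in> X" for y
  proof -
    have "\<exists>y'. y' \<in> orbit G \<phi> y" using A.orbit_refl y by blast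
    then have "(SOME y'. y' \<in> orbit G \<phi> y) \<in> orbit G \<phi> y" by (rule someI_ex)
    then obtain g where g: "g \<in> carrier G" "(SOME y'. y' \<in> orbit G \<phi> y) = \<phi> g y"
      unfolding orbit_def by blast
    show ?thesis unfolding induced_map_def g(2) using comm[OF g(1) y, symmetric] orb_eq g(1) T_maps y
      by simp
  qed
  have indj: "(induced_map G \<phi> T ^^ j) (orbit_proj G \<phi> x) = orbit G \<phi> ((T ^^ j) x)" for j
    by (induction j) (auto simp: orbit_proj_def ind TjX xX)
  have orbj: "orbit G \<phi> ((T ^^ j) x) = orbit G \<phi> ((T ^^ (j mod d)) x)" for j
  proof -
    have "(T ^^ j) x = (T ^^ (j mod d)) ((T ^^ ((j div d) * d)) x)"
      by (simp add: funpow_apply_add[symmetric])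
    also have "\<dots> = \<phi> (g0 [^]\<^bsub>G\<^esub> (j div d)) ((T ^^ (j mod d)) x)"
      using gpow commj xX g0(1) by simp
    finally show ?thesis using orb_eq g0(1) TjX xX by simp
  qed
  have orbinj: "inj_on (\<lambda>j. orbit G \<phi> ((T ^^ j) x)) {..<d}"
  proof (rule inj_onI, rule ccontr)
    fix a b assume a: "a \<in> {..<d}" and b: "b \<in> {..<d}" and e: "orbit G \<phi> ((T ^^ a) x) = orbit G \<phi> ((T ^^ b) x)" and ne: "a \<noteq> b"
    { fix a b assume a: "a < d" and b: "b < d" and e: "orbit G \<phi> ((T ^^ a) x) = orbit G \<phi> ((T ^^ b) x)" and lt: "a < b"
      have "(T ^^ b) x \<in> orbit G \<phi> ((T ^^ a) x)" using e A.orbit_refl TjX xX by simp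
      then obtain g where g: "g \<in> carrier G" "(T ^^ b) x = \<phi> g ((T ^^ a) x)" unfolding orbit_def by blast
      have pa: "a \<le> p * a" using p(1) by simp
      have "(T ^^ (p * a - a + b)) x = (T ^^ (p * a - a)) ((T ^^ b) x)" by (rule funpow_apply_add)
      also have "\<dots> = (T ^^ (p * a - a)) (\<phi> g ((T ^^ a) x))" unfolding g(2) ..
      also have "\<dots> = (T ^^ (p * a - a)) ((T ^^ a) (\<phi> g x))" unfolding commj[OF g(1) xX] ..
      also have "\<dots> = (T ^^ (p * a - a + a)) (\<phi> g x)" by (rule funpow_apply_add[symmetric])
      also have "\<dots> = (T ^^ (a * p)) (\<phi> g x)" using pa by (simp add: mult.commute)
      also have "\<dots> = \<phi> g ((T ^^ (a * p)) x)" by (rule commj[OF g(1) xX, symmetric])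
      also have "\<dots> = \<phi> g x" unfolding pmul ..
      finally have e1: "(T ^^ (p * a - a + b)) x = \<phi> g x" .
      have e2: "p * a - a + b = (b - a) + a * p"
        using pa lt by (simp add: mult.commute)
      have "(T ^^ (b - a)) x = (T ^^ ((b - a) + a * p)) x"
        by (simp only: funpow_apply_add pmul)
      also have "\<dots> = \<phi> g x" using e1 e2 by simp
      finally have e3: "(T ^^ (b - a)) x = \<phi> g x" .
      have "P (b - a)" by (rule Pdef2[THEN iffD2], rule bexI[OF _ g(1)], rule e3)
      then have False using dmin[of "b - a"] lt b by simp }
    note H = this
    show False
    proof (cases "a < b")
      case True then show ?thesis using H[of a b] a b e by simp
    next
      case False then have "b < a" using ne by simp
      then show ?thesis using H[of b a] a b e by simp
    qed
  qed
  have Torb2: "T_orbit (induced_map G \<phi> T) (orbit_proj G \<phi> x) = (\<lambda>j. orbit G \<phi> ((T ^^ j) x)) ` {..<d}"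
  proof
    show "T_orbit (induced_map G \<phi> T) (orbit_proj G \<phi> x) \<subseteq> (\<lambda>j. orbit G \<phi> ((T ^^ j) x)) ` {..<d}"
    proof
      fix z assume "z \<in> T_orbit (induced_map G \<phi> T) (orbit_proj G \<phi> x)"
      then obtain j where "z = orbit G \<phi> ((T ^^ j) x)" unfolding T_orbit_def indj by blast
      then have "z = orbit G \<phi> ((T ^^ (j mod d)) x)" "j mod d \<in> {..<d}" using orbj[of j] d(1) by auto
      then show "z \<in> (\<lambda>j. orbit G \<phi> ((T ^^ j) x)) ` {..<d}" by blast
    qed
    show "(\<lambda>j. orbit G \<phi> ((T ^^ j) x)) ` {..<d} \<subseteq> T_orbit (induced_map G \<phi> T) (orbit_proj G \<phi> x)"
      unfolding T_orbit_def indj by auto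
  qed
  have cardO: "card (T_orbit (induced_map G \<phi> T) (orbit_proj G \<phi> x)) = d"
    using Torb2 orbinj by (simp add: card_image)
  have key: "(real d = 1 / real k * real p) \<longleftrightarrow> k0 = k"
    by (rule keyarith[OF d(1) k0pos k0])
  have setg: "T_orbit T x \<inter> orbit G \<phi> x = {\<phi> (g0 [^]\<^bsub>G\<^esub> i) x | i :: nat. True}"
  proof
    show "T_orbit T x \<inter> orbit G \<phi> x \<subseteq> {\<phi> (g0 [^]\<^bsub>G\<^esub> i) x | i :: nat. True}"
    proof
      fix z assume "z \<in> T_orbit T x \<inter> orbit G \<phi> x"
      then obtain i where "z = (T ^^ (i * d)) x" using Int_eq by blast
      then have "z = \<phi> (g0 [^]\<^bsub>G\<^esub> i) x" using gpow[of i] by simp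
      then show "z \<in> {\<phi> (g0 [^]\<^bsub>G\<^esub> i) x | i :: nat. True}" by blast
    qed
    show "{\<phi> (g0 [^]\<^bsub>G\<^esub> i) x | i :: nat. True} \<subseteq> T_orbit T x \<inter> orbit G \<phi> x"
    proof
      fix z assume "z \<in> {\<phi> (g0 [^]\<^bsub>G\<^esub> i) x | i :: nat. True}"
      then obtain i :: nat where i: "z = \<phi> (g0 [^]\<^bsub>G\<^esub> i) x" by blast
      then have "z = (T ^^ (i * d)) x" using gpow[of i] by simp
      then have "z \<in> T_orbit T x" unfolding T_orbit_def by blast
      moreover have "z \<in> orbit G \<phi> x" using i g0(1) unfolding orbit_def by blast
      ultimately show "z \<in> T_orbit T x \<inter> orbit G \<phi> x" by blast
    qed
  qed
  show ?thesis unfolding cardO cardT cardI using key setg g0(1) by blast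
qed

end
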